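(* Let $\lambda>0$ and let $\mu,m,g,\varkappa,\sigma_t$ be as described below. Then $$\lim_{t\to\infty}\sigma_t\,t\,g''(\lambda\sigma_t)=-\varkappa\lambda^{-2}\qquad\text{and}\qquad\lim_{t\to\infty}\sigma_t\,g'(\lambda\sigma_t)=0.$$
   Context: $\mu$ is a probability distribution on $(0,1)$, and $m(x)=-\log\mu((x,1))$ for $x\in[0,1)$ is twice differentiable on $[0,1)$ with $m'>0$ and $m''>0$ there, $\lim_{x\uparrow1}m''(x)/(m'(x))^2=0$, $\lim_{x\uparrow1}m''(x)m(x)x/(m'(x))^2=\varkappa$ for some $\varkappa>0$, and $\lim_{x\uparrow1}m(x)/m'(x)=0$. $g=m^{-1}:[0,\infty)\to[0,1)$. For all sufficiently large $t$, $\sigma_t$ denotes the unique solution $x\in[0,t)$ of $(\log g)'(\lambda x)=\frac1{\lambda(t-x)}$. *)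

theory Defs
  imports "HOL-Probability.Probability"
begin

end

theory Submission
  imports Defs
begin

lemma alg9:
  fixes lam P X S T M Q :: real
  assumes "lam > 0" "P \<noteq> 0" "X > 0" "S = M / lam" "T = (X * P + M) / lam"
  shows "- (1 / lam\<^sup>2) * (Q * M * X / P\<^sup>2 + Q * M * X / P\<^sup>2 * (M / P) / X) = S * T * (- Q / P ^ 3)"
  using assms by (simp add: field_simps power2_eq_square power3_eq_cube)

theorem lemma9:
  fixes \<mu> :: "real measure"
    and m m' m'' g \<sigma> :: "real \<Rightarrow> real"
    and \<kappa> lam :: real
  assumes prob: "prob_space \<mu>"
    and sets_mu: "sets \<mu> = sets borel"
    and supp: "measure \<mu> {0<..<1} = 1"
    and m_def: "\<forall>x\<in>{0..<1}. m x = - ln (measure \<mu> {x<..<1})"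
    and m_deriv: "\<forall>x\<in>{0..<1}. (m has_real_derivative m' x) (at x within {0..<1})"
    and m'_deriv: "\<forall>x\<in>{0..<1}. (m' has_real_derivative m'' x) (at x within {0..<1})"
    and m'_pos: "\<forall>x\<in>{0..<1}. m' x > 0"
    and m''_pos: "\<forall>x\<in>{0..<1}. m'' x > 0"
    and lim1: "((\<lambda>x. m'' x / (m' x)\<^sup>2) \<longlongrightarrow> 0) (at_left 1)"
    and lim2: "((\<lambda>x. m'' x * m x * x / (m' x)\<^sup>2) \<longlongrightarrow> \<kappa>) (at_left 1)"
    and kappa_pos: "\<kappa> > 0"
    and lim3: "((\<lambda>x. m x / m' x) \<longlongrightarrow> 0) (at_left 1)"
    and g_inv: "\<forall>y\<ge>0. g y \<in> {0..<1} \<and> m (g y) = y"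
    and lambda_pos: "lam > 0"
    and sigma: "eventually (\<lambda>t. \<sigma> t \<in> {0<..<t}
                 \<and> deriv (\<lambda>y. ln (g y)) (lam * \<sigma> t) = 1 / (lam * (t - \<sigma> t))
                 \<and> (\<forall>x\<in>{0<..<t}. deriv (\<lambda>y. ln (g y)) (lam * x) = 1 / (lam * (t - x))
                        \<longrightarrow> x = \<sigma> t)) at_top"
  shows "((\<lambda>t. \<sigma> t * t * deriv (deriv g) (lam * \<sigma> t)) \<longlongrightarrow> - \<kappa> / lam\<^sup>2) at_top
         \<and> ((\<lambda>t. \<sigma> t * deriv g (lam * \<sigma> t)) \<longlongrightarrow> 0) at_top"
proof -
  have m0: "m 0 = 0" using m_def supp by simp
  have mp: "m' z > 0" if "0 \<le> z" "z < 1" for z using m'_pos that by simp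
  have Dm: "DERIV m x :> m' x" if "0 < x" "x < 1" for x
  proof -
    have "(m has_real_derivative m' x) (at x within {0<..<1})"
      by (rule has_field_derivative_subset[OF m_deriv[rule_format]]) (use that in auto)
    moreover have "at x within {0<..<1} = at x"
      by (rule at_within_open) (use that in auto)
    ultimately show ?thesis by metis
  qed
  have Dm': "DERIV m' x :> m'' x" if "0 < x" "x < 1" for x
  proof -
    have "(m' has_real_derivative m'' x) (at x within {0<..<1})"
      by (rule has_field_derivative_subset[OF m'_deriv[rule_format]]) (use that in auto)
    moreover have "at x within {0<..<1} = at x"
      by (rule at_within_open) (use that in auto)
    ultimately show ?thesis by metis
  qed
  have cm: "continuous_on {0..<1} m"
    unfolding continuous_on_eq_continuous_within
    using m_deriv by (blast intro: DERIV_continuous)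
  have cm': "continuous_on {0..<1} m'"
    unfolding continuous_on_eq_continuous_within
    using m'_deriv by (blast intro: DERIV_continuous)
  have mono: "m x < m y" if "0 \<le> x" "x < y" "y < 1" for x y
  proof (rule DERIV_pos_imp_increasing_open[OF \<open>x < y\<close>])
    show "\<exists>d. DERIV m z :> d \<and> d > 0" if "x < z" "z < y" for z
    proof -
      have z: "0 < z" "z < 1" using that \<open>0 \<le> x\<close> \<open>y < 1\<close> by auto
      show ?thesis using Dm[OF z] m'_pos z by auto
    qed
    show "continuous_on {x..y} m" by (rule continuous_on_subset[OF cm]) (use that in auto)
  qed
  have mono': "m' x \<le> m' y" if "0 \<le> x" "x \<le> y" "y < 1" for x y
  proof (rule DERIV_nonneg_imp_increasing_open[OF \<open>x \<le> y\<close>])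
    show "\<exists>d. DERIV m' z :> d \<and> d \<ge> 0" if "x < z" "z < y" for z
    proof -
      have z: "0 < z" "z < 1" using that \<open>0 \<le> x\<close> \<open>y < 1\<close> by auto
      have "m'' z > 0" using m''_pos z by auto
      then show ?thesis using Dm'[OF z] by (intro exI[of _ "m'' z"]) auto
    qed
    show "continuous_on {x..y} m'" by (rule continuous_on_subset[OF cm']) (use that in auto)
  qed
  have mnn: "m x \<ge> 0" if "0 \<le> x" "x < 1" for x
    using mono[of 0 x] m0 that by (cases "x = 0") auto
  have gm: "g (m z) = z" if "0 \<le> z" "z < 1" for z
  proof -
    have "g (m z) \<in> {0..<1}" "m (g (m z)) = m z" using g_inv mnn[OF that] by auto
    then show ?thesis using mono[of z "g (m z)"] mono[of "g (m z)" z] that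
      by (metis atLeastLessThan_iff less_irrefl linorder_neqE_linordered_idom)
  qed
  have gpos: "g y \<in> {0<..<1}" if "y > 0" for y
    using g_inv that m0 by (metis atLeastLessThan_iff greaterThanLessThan_iff less_eq_real_def less_irrefl)
  have Dg: "DERIV g y :> 1 / m' (g y)" if "y > 0" for y
  proof -
    have gy: "0 < g y" "g y < 1" using gpos[OF that] by auto
    obtain a b where ab: "0 < a" "a < g y" "g y < b" "b < 1"
      using gy by (metis dense)
    have ic: "isCont m z" if "a \<le> z" "z \<le> b" for z
      by (rule DERIV_isCont[OF Dm]) (use ab that in auto)
    have ig: "g (m z) = z" if "a \<le> z" "z \<le> b" for z
      by (rule gm) (use ab that in auto)
    have "isCont g (m (g y))"
      by (rule isCont_inverse_function2[OF ab(2,3) ig ic])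
    then have c: "isCont g y" using g_inv that by simp
    have "DERIV g y :> inverse (m' (g y))"
    proof (rule DERIV_inverse_function[where a=0 and b="y+1"])
      show "DERIV m (g y) :> m' (g y)" using Dm gy by blast
      show "m' (g y) \<noteq> 0" using mp[of "g y"] gy by auto
      show "0 < y" "y < y + 1" using that by auto
      show "m (g z) = z" if "0 < z" "z < y + 1" for z using g_inv that by auto
      show "isCont g y" by (rule c)
    qed
    then show ?thesis by (simp add: inverse_eq_divide)
  qed
  have dg: "deriv g y = 1 / m' (g y)" if "y > 0" for y
    using Dg[OF that] by (rule DERIV_imp_deriv)
  have ddg: "deriv (deriv g) y = - m'' (g y) / (m' (g y))^3" if "y > 0" for y
  proof -
    have gy: "0 < g y" "g y < 1" using gpos[OF that] by auto
    have nz: "m' (g y) \<noteq> 0" using mp[of "g y"] gy by auto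
    have "DERIV (\<lambda>y. 1 / m' (g y)) y :> - (m'' (g y) * (1 / m' (g y))) / (m' (g y))^2"
      using DERIV_chain2[OF Dm'[OF gy] Dg[OF that]] nz
      by (auto intro!: derivative_eq_intros simp: power2_eq_square)
    then have "DERIV (deriv g) y :> - (m'' (g y) * (1 / m' (g y))) / (m' (g y))^2"
      by (rule has_field_derivative_transform_within_open[where S="{0<..}"])
        (use that dg in auto)
    then have "deriv (deriv g) y = - (m'' (g y) * (1 / m' (g y))) / (m' (g y))^2"
      by (rule DERIV_imp_deriv)
    then show ?thesis using nz by (simp add: field_simps power2_eq_square power3_eq_cube)
  qed
  have dlg: "deriv (\<lambda>y. ln (g y)) y = 1 / (g y * m' (g y))" if "y > 0" for y
  proof -
    have gy: "0 < g y" "g y < 1" using gpos[OF that] by auto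
    have "DERIV (\<lambda>y. ln (g y)) y :> (1 / m' (g y)) / g y"
      using DERIV_chain2[OF DERIV_ln[OF gy(1)] Dg[OF that]] by (simp add: divide_inverse mult.commute)
    then show ?thesis by (simp add: DERIV_imp_deriv)
  qed
  define x where "x t = g (lam * \<sigma> t)" for t
  have ev: "eventually (\<lambda>t. 0 < x t \<and> x t < 1 \<and> m (x t) = lam * \<sigma> t
      \<and> x t * m' (x t) = lam * (t - \<sigma> t) \<and> \<sigma> t > 0) at_top"
    using sigma
  proof eventually_elim
    case (elim t)
    then have s: "0 < \<sigma> t" "\<sigma> t < t" by auto
    have p: "lam * \<sigma> t > 0" using s lambda_pos by simp
    have gy: "0 < x t" "x t < 1" using gpos[OF p] x_def by auto
    have "m (x t) = lam * \<sigma> t" using g_inv p x_def by auto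
    moreover have "1 / (x t * m' (x t)) = 1 / (lam * (t - \<sigma> t))"
      using elim dlg[OF p] x_def by simp
    then have "x t * m' (x t) = lam * (t - \<sigma> t)" by simp
    ultimately show ?case using gy s by auto
  qed
  have xlim: "filterlim x (at_left 1) at_top"
    unfolding filterlim_at
  proof
    show "\<forall>\<^sub>F t in at_top. x t \<in> {..<1} \<and> x t \<noteq> 1" using ev by eventually_elim auto
    show "(x \<longlongrightarrow> 1) at_top"
    proof (rule order_tendstoI)
      fix a :: real assume "a > 1"
      then show "\<forall>\<^sub>F t in at_top. x t < a" using ev by (auto elim: eventually_mono)
    next
      fix a :: real assume "a < 1"
      define b where "b = max a 0"
      have b: "0 \<le> b" "b < 1" "a \<le> b" using \<open>a < 1\<close> b_def by auto
      have "eventually (\<lambda>t. t > (m' b + m b) / lam) at_top" by (rule eventually_gt_at_top)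
      then show "\<forall>\<^sub>F t in at_top. a < x t" using ev
      proof eventually_elim
        case (elim t)
        show ?case
        proof (rule ccontr)
          assume "\<not> a < x t"
          then have le: "x t \<le> b" using b by auto
          have e1: "lam * t = x t * m' (x t) + m (x t)" using elim by (simp add: algebra_simps)
          have mpx: "m' (x t) > 0" using mp[of "x t"] elim by auto
          have e2: "x t * m' (x t) \<le> m' (x t)"
            using mult_right_mono[of "x t" 1 "m' (x t)"] elim mpx by simp
          have e3: "m' (x t) \<le> m' b" using mono'[of "x t" b] elim le b by auto
          have e4: "m (x t) \<le> m b" using mono[of "x t" b] elim le b by (cases "x t = b") auto
          have "lam * t \<le> m' b + m b" using e1 e2 e3 e4 by linarith
          then have "t \<le> (m' b + m b) / lam" using lambda_pos by (simp add: field_simps)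
          then show False using elim by simp
        qed
      qed
    qed
  qed
  have L1: "((\<lambda>t. m'' (x t) * m (x t) * x t / (m' (x t))\<^sup>2) \<longlongrightarrow> \<kappa>) at_top"
    using filterlim_compose[OF lim2 xlim] by (simp add: o_def)
  have L3: "((\<lambda>t. m (x t) / m' (x t)) \<longlongrightarrow> 0) at_top"
    using filterlim_compose[OF lim3 xlim] by (simp add: o_def)
  have X1: "(x \<longlongrightarrow> 1) at_top" using xlim by (simp add: filterlim_at)
  define F where "F t = - (1 / lam\<^sup>2) * (m'' (x t) * m (x t) * x t / (m' (x t))\<^sup>2
       + m'' (x t) * m (x t) * x t / (m' (x t))\<^sup>2 * (m (x t) / m' (x t)) / x t)" for t
  have A0: "(F \<longlongrightarrow> - (1 / lam\<^sup>2) * (\<kappa> + \<kappa> * 0 / 1)) at_top"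
    unfolding F_def by (intro tendsto_intros L1 L3 X1) auto
  have A: "(F \<longlongrightarrow> - \<kappa> / lam\<^sup>2) at_top" using A0 by simp
  define G where "G t = (1 / lam) * (m (x t) / m' (x t))" for t
  have B0: "(G \<longlongrightarrow> (1 / lam) * 0) at_top"
    unfolding G_def by (intro tendsto_intros L3)
  have B: "(G \<longlongrightarrow> 0) at_top" using B0 by simp
  show ?thesis
  proof
    show "((\<lambda>t. \<sigma> t * t * deriv (deriv g) (lam * \<sigma> t)) \<longlongrightarrow> - \<kappa> / lam\<^sup>2) at_top"
    proof (rule Lim_transform_eventually[OF A])
      show "\<forall>\<^sub>F t in at_top. F t = \<sigma> t * t * deriv (deriv g) (lam * \<sigma> t)"
        using ev
      proof eventually_elim
        case (elim t)
        have p: "lam * \<sigma> t > 0" using elim lambda_pos by simp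
        have nz: "m' (x t) \<noteq> 0" using mp[of "x t"] elim by auto
        have s: "\<sigma> t = m (x t) / lam" using elim lambda_pos by (simp add: field_simps)
        have tt: "t = (x t * m' (x t) + m (x t)) / lam" using elim lambda_pos by (simp add: field_simps)
        show ?case unfolding ddg[OF p] x_def[symmetric] F_def
          by (rule alg9[OF lambda_pos nz _ s tt]) (use elim in auto)
      qed
    qed
  next
    show "((\<lambda>t. \<sigma> t * deriv g (lam * \<sigma> t)) \<longlongrightarrow> 0) at_top"
    proof (rule Lim_transform_eventually[OF B])
      show "\<forall>\<^sub>F t in at_top. G t = \<sigma> t * deriv g (lam * \<sigma> t)"
        using ev
      proof eventually_elim
        case (elim t)
        have p: "lam * \<sigma> t > 0" using elim lambda_pos by simp
        show ?case unfolding dg[OF p] x_def[symmetric] G_def using elim lambda_pos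
          by (simp add: field_simps)
      qed
    qed
  qed
qed

end
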